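(* Let $\varphi_1$ and $\varphi_2$ be two $\mathbb{T}$-gains on a connected graph $G$ with $n$ vertices and $m$ edges. Let $T$ be a normal spanning tree of $G$ such that $\varphi_1(\overrightarrow{C_j(T)})=\varphi_2(\overrightarrow{C_j(T)})$ for all $j=1,\dots,m-n+1$. Then $A(\Phi_1)$ and $A(\Phi_2)$ have the same spectrum, i.e. $\Phi_1=(G,\varphi_1)$ and $\Phi_2=(G,\varphi_2)$ are $\mathbb{T}$-cospectral.
   Context: Graphs are finite, simple and undirected, $V(G)=\{v_1,\dots,v_n\}$. $\mathbb{T}=\{z\in\mathbb{C}:|z|=1\}$. A $\mathbb{T}$-gain on $G$ is a map $\varphi$ from oriented edges to $\mathbb{T}$ with $\varphi(\overrightarrow{e_{ts}})=\varphi(\overrightarrow{e_{st}})^{-1}$; $\Phi=(G,\varphi)$ is a $\mathbb{T}$-gain graph, with adjacency matrix $A(\Phi)$ the $n\times n$ Hermitian matrix whose $(s,t)$ entry is $\varphi(\overrightarrow{e_{st}})$ if $v_s\sim v_t$ and $0$ otherwise. Two $\mathbb{T}$-gain graphs are $\mathbb{T}$-cospectral if their adjacency matrices have the same spectrum. The gain of a directed cycle is the product of gains of its oriented edges. A rooted spanning tree $T$ with root $v_r$ induces the tree order ($v_x\le v_y$ iff $v_x$ lies on the $T$-path from $v_r$ to $v_y$); $T$ is normal if adjacent vertices of $G$ are always comparable. The suitably oriented graph $\overrightarrow{G_T}$ orients each edge $e_{st}$ with $v_s\le v_t$ as $\overrightarrow{e_{st}}$ if $e_{st}\in E(T)$ and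 as $\overrightarrow{e_{ts}}$ otherwise. Each of the $m-n+1$ non-tree edges creates a unique fundamental cycle with $T$, a directed cycle $\overrightarrow{C_j(T)}$ in $\overrightarrow{G_T}$. *)

theory Defs
  imports Complex_Main "Jordan_Normal_Form.Char_Poly"
begin

definition simple_graph :: "nat \<Rightarrow> (nat \<Rightarrow> nat \<Rightarrow> bool) \<Rightarrow> bool" where
  "simple_graph n E \<longleftrightarrow> (\<forall>u v. E u v \<longrightarrow> u < n \<and> v < n \<and> u \<noteq> v \<and> E v u)"

definition is_path :: "(nat \<Rightarrow> nat \<Rightarrow> bool) \<Rightarrow> nat list \<Rightarrow> nat \<Rightarrow> nat \<Rightarrow> bool" where
  "is_path R p u v \<longleftrightarrow> p \<noteq> [] \<and> hd p = u \<and> last p = v \<and> distinct p \<and>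
     (\<forall>i. Suc i < length p \<longrightarrow> R (p ! i) (p ! Suc i))"

definition connected_graph :: "nat \<Rightarrow> (nat \<Rightarrow> nat \<Rightarrow> bool) \<Rightarrow> bool" where
  "connected_graph n E \<longleftrightarrow> (\<forall>u<n. \<forall>v<n. \<exists>p. is_path E p u v)"

definition has_cycle :: "(nat \<Rightarrow> nat \<Rightarrow> bool) \<Rightarrow> bool" where
  "has_cycle R \<longleftrightarrow> (\<exists>p. length p \<ge> 3 \<and> is_path R p (hd p) (last p) \<and> R (last p) (hd p))"

definition spanning_tree :: "nat \<Rightarrow> (nat \<Rightarrow> nat \<Rightarrow> bool) \<Rightarrow> (nat \<Rightarrow> nat \<Rightarrow> bool) \<Rightarrow> bool" where
  "spanning_tree n E T \<longleftrightarrow> simple_graph n T \<and> (\<forall>u v. T u v \<longrightarrow> E u v)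
     \<and> connected_graph n T \<and> \<not> has_cycle T"

definition tree_le :: "(nat \<Rightarrow> nat \<Rightarrow> bool) \<Rightarrow> nat \<Rightarrow> nat \<Rightarrow> nat \<Rightarrow> bool" where
  "tree_le T r x y \<longleftrightarrow> (\<exists>p. is_path T p r y \<and> x \<in> set p)"

definition normal_spanning_tree ::
  "nat \<Rightarrow> (nat \<Rightarrow> nat \<Rightarrow> bool) \<Rightarrow> (nat \<Rightarrow> nat \<Rightarrow> bool) \<Rightarrow> nat \<Rightarrow> bool" where
  "normal_spanning_tree n E T r \<longleftrightarrow> spanning_tree n E T \<and> r < n \<and>
     (\<forall>u v. E u v \<longrightarrow> tree_le T r u v \<or> tree_le T r v u)"

text \<open>phi s t is the gain of the oriented edge from s to t.\<close>
definition T_gain :: "nat \<Rightarrow> (nat \<Rightarrow> nat \<Rightarrow> bool) \<Rightarrow> (nat \<Rightarrow> nat \<Rightarrow> complex) \<Rightarrow> bool" where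
  "T_gain n E phi \<longleftrightarrow> (\<forall>s t. E s t \<longrightarrow> cmod (phi s t) = 1 \<and> phi t s = inverse (phi s t))"

definition walk_gain :: "(nat \<Rightarrow> nat \<Rightarrow> complex) \<Rightarrow> nat list \<Rightarrow> complex" where
  "walk_gain phi p = (\<Prod>i<length p - 1. phi (p ! i) (p ! Suc i))"

definition gain_adj :: "nat \<Rightarrow> (nat \<Rightarrow> nat \<Rightarrow> bool) \<Rightarrow> (nat \<Rightarrow> nat \<Rightarrow> complex) \<Rightarrow> complex mat" where
  "gain_adj n E phi = mat n n (\<lambda>(s, t). if E s t then phi s t else 0)"

definition cospectral :: "complex mat \<Rightarrow> complex mat \<Rightarrow> bool" where
  "cospectral A B \<longleftrightarrow> (\<forall>z. order z (char_poly A) = order z (char_poly B))"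

end

theory Submission
  imports Defs
begin

lemma is_path_alt: "is_path R p u v \<longleftrightarrow> p \<noteq> [] \<and> hd p = u \<and> last p = v \<and> distinct p \<and> successively R p"
  unfolding is_path_def successively_conv_nth by blast

lemma path_unique:
  assumes sym: "\<And>x y. R x y \<Longrightarrow> R y x" and nc: "\<not> has_cycle R"
  shows "is_path R p u v \<Longrightarrow> is_path R q u v \<Longrightarrow> p = q"
proof (induction p arbitrary: u q)
  case Nil thus ?case by (simp add: is_path_def)
next
  case (Cons x p)
  hence xu: "x = u" by (simp add: is_path_alt)
  obtain q' where q: "q = u # q'" using Cons.prems by (cases q) (auto simp: is_path_alt)
  show ?case
  proof (cases "p = []")
    case True
    then have "u = v" using Cons.prems xu by (simp add: is_path_alt)
    then have "q' = []" using Cons.prems(2) q by (auto simp: is_path_alt split: if_splits)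
    thus ?thesis using True q xu by simp
  next
    case False
    have q'ne: "q' \<noteq> []"
    proof
      assume "q' = []"
      then have "u = v" using Cons.prems(2) q by (auto simp: is_path_alt split: if_splits)
      moreover have "v \<in> set p" using Cons.prems(1) False by (auto simp: is_path_alt)
      ultimately show False using Cons.prems(1) xu by (auto simp: is_path_alt)
    qed
    obtain a p'' where p: "p = a # p''" using False by (cases p) auto
    obtain b q'' where q'': "q' = b # q''" using q'ne by (cases q') auto
    have pp: "is_path R p a v" using Cons.prems(1) p False by (auto simp: is_path_alt)
    have qp: "is_path R q' b v" using Cons.prems(2) q q'' q'ne by (auto simp: is_path_alt)
    show ?thesis
    proof (cases "a = b")
      case True
      then show ?thesis using Cons.IH[OF pp] qp xu q by simp
    next
      case False
      define P where "P = (\<lambda>x. x \<notin> set q')"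
      define p1 where "p1 = takeWhile P p"
      have vq: "v \<in> set q'" "v \<in> set p" using pp qp by (auto simp: is_path_alt) (metis last_in_set)+
      have "dropWhile P p \<noteq> []" using vq by (auto simp: dropWhile_eq_Nil_conv P_def)
      then obtain w rest where dw: "dropWhile P p = w # rest" by (cases "dropWhile P p") auto
      have wq: "w \<in> set q'" using dw hd_dropWhile[of P p] by (auto simp: P_def)
      have pdec: "p = p1 @ w # rest" using takeWhile_dropWhile_id[of P p] dw p1_def by simp
      have p1q: "\<forall>y\<in>set p1. y \<notin> set q'" unfolding p1_def using set_takeWhileD[of _ P p] P_def by blast
      obtain q1 q2 where qdec: "q' = q1 @ w # q2" using wq by (meson split_list)
      define c where "c = u # p1 @ w # rev q1"
      have up: "u \<notin> set p" "u \<notin> set q'" using Cons.prems xu q by (auto simp: is_path_alt)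
      have dp: "distinct p" "distinct q'" using pp qp by (auto simp: is_path_alt)
      have sp: "successively R (u # p)" "successively R (u # q')"
        using Cons.prems xu q by (auto simp: is_path_alt)
      have "distinct c" using up dp p1q unfolding c_def pdec qdec by auto
      moreover have "length c \<ge> 3"
      proof -
        have "p1 \<noteq> [] \<or> q1 \<noteq> []"
        proof (rule ccontr)
          assume "\<not> (p1 \<noteq> [] \<or> q1 \<noteq> [])"
          then show False using False pdec qdec p q'' by auto
        qed
        then show ?thesis unfolding c_def by (auto simp: Suc_leI)
      qed
      moreover have "successively R c"
      proof -
        have s1: "successively R (u # p1 @ [w])"
          using sp(1) unfolding pdec by (simp add: successively_append_iff[of _ "u # p1 @ [w]" rest, simplified])
        have s2: "successively R (q1 @ [w])"
          using sp(2) unfolding qdec successively_Cons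
          by (simp add: successively_append_iff[of _ "q1 @ [w]" q2, simplified])
        have s3: "successively R (w # rev q1)"
        proof -
          have "successively (\<lambda>x y. R y x) (q1 @ [w])"
            using s2 by (rule successively_mono) (auto intro: sym)
          then have "successively R (rev (q1 @ [w]))" by (simp only: successively_rev)
          then show ?thesis by simp
        qed
        have e: "c = (u # p1) @ (w # rev q1)" unfolding c_def by simp
        have s4: "successively R (u # p1)" "R (last (u # p1)) w"
          using s1 successively_append_iff[of R "u # p1" "[w]"] by auto
        show ?thesis unfolding e using s3 s4
          by (simp only: successively_append_iff list.sel(1)) blast
      qed
      moreover have "R (last c) (hd c)"
      proof -
        have "last c = b" using qdec q'' unfolding c_def by (cases q1) (auto simp: last_rev)
        moreover have "R u b" using sp(2) q'' by simp
        ultimately show ?thesis using sym unfolding c_def by simp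
      qed
      ultimately have "has_cycle R" unfolding has_cycle_def is_path_alt
        by (intro exI[of _ c]) (auto simp: c_def)
      with nc show ?thesis by simp
    qed
  qed
qed


lemma wg_snoc: "p \<noteq> [] \<Longrightarrow> walk_gain phi (p @ [x]) = walk_gain phi p * phi (last p) x"
proof -
  assume ne: "p \<noteq> []"
  then obtain k where k: "length p = Suc k" by (cases p) auto
  have "walk_gain phi (p @ [x]) = (\<Prod>i<Suc k. phi ((p @ [x]) ! i) ((p @ [x]) ! Suc i))"
    unfolding walk_gain_def using k by simp
  also have "\<dots> = (\<Prod>i<k. phi ((p @ [x]) ! i) ((p @ [x]) ! Suc i)) * phi ((p @ [x]) ! k) ((p @ [x]) ! Suc k)"
    by simp
  also have "(\<Prod>i<k. phi ((p @ [x]) ! i) ((p @ [x]) ! Suc i)) = (\<Prod>i<k. phi (p ! i) (p ! Suc i))"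
    by (rule prod.cong) (auto simp: nth_append k)
  also have "phi ((p @ [x]) ! k) ((p @ [x]) ! Suc k) = phi (last p) x"
    using k ne by (simp add: nth_append last_conv_nth)
  finally show ?thesis unfolding walk_gain_def using k by simp
qed

lemma wg_nz:
  assumes "T_gain n E phi" "successively E p"
  shows "walk_gain phi p \<noteq> 0"
proof -
  have "\<And>i. i < length p - 1 \<Longrightarrow> phi (p ! i) (p ! Suc i) \<noteq> 0"
  proof -
    fix i assume "i < length p - 1"
    then have "E (p ! i) (p ! Suc i)" using assms(2) successively_nth by (metis less_diff_conv Suc_eq_plus1)
    then have "cmod (phi (p ! i) (p ! Suc i)) = 1" using assms(1) unfolding T_gain_def by blast
    then show "phi (p ! i) (p ! Suc i) \<noteq> 0" by auto
  qed
  then show ?thesis unfolding walk_gain_def by (simp add: prod_zero_iff)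
qed

lemma rel_sym:
  assumes "T_gain n E phi1" "T_gain n E phi2" "E s t"
    and "phi2 s t * d s = phi1 s t * d t"
  shows "phi2 t s * d t = phi1 t s * d s"
proof -
  have a: "phi1 t s = inverse (phi1 s t)" "phi2 t s = inverse (phi2 s t)"
    using assms unfolding T_gain_def by auto
  have b: "phi1 s t \<noteq> 0" "phi2 s t \<noteq> 0"
    using assms unfolding T_gain_def by (metis norm_zero zero_neq_one)+
  show ?thesis unfolding a using b assms(4) by (simp add: field_simps)
qed

theorem theorem3p2:
  fixes n :: nat and E T :: "nat \<Rightarrow> nat \<Rightarrow> bool" and r :: nat
    and phi1 phi2 :: "nat \<Rightarrow> nat \<Rightarrow> complex"
  assumes "simple_graph n E" and "connected_graph n E"
    and "T_gain n E phi1" and "T_gain n E phi2"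
    and "normal_spanning_tree n E T r"
    and "\<And>s t p. E s t \<Longrightarrow> \<not> T s t \<Longrightarrow> tree_le T r s t \<Longrightarrow> is_path T p s t \<Longrightarrow>
           walk_gain phi1 (p @ [s]) = walk_gain phi2 (p @ [s])"
  shows "cospectral (gain_adj n E phi1) (gain_adj n E phi2)"
proof -
  note g1 = assms(3) and g2 = assms(4)
  have sT: "simple_graph n T" and TE: "\<And>u v. T u v \<Longrightarrow> E u v" and cT: "connected_graph n T"
    and ncT: "\<not> has_cycle T" and rn: "r < n"
    and norm: "\<And>u v. E u v \<Longrightarrow> tree_le T r u v \<or> tree_le T r v u"
    using assms(5) unfolding normal_spanning_tree_def spanning_tree_def by auto
  have symT: "\<And>x y. T x y \<Longrightarrow> T y x" and Tn: "\<And>x y. T x y \<Longrightarrow> x < n \<and> y < n \<and> x \<noteq> y"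
    using sT unfolding simple_graph_def by auto
  have symE: "\<And>x y. E x y \<Longrightarrow> E y x" using assms(1) unfolding simple_graph_def by auto
  have phinz: "phi1 s t \<noteq> 0 \<and> phi2 s t \<noteq> 0" if "E s t" for s t
    using g1 g2 that unfolding T_gain_def by (metis norm_zero zero_neq_one)
  have sTE: "\<And>p. successively T p \<Longrightarrow> successively E p"
    by (erule successively_mono) (rule TE)
  define P where "P x = (SOME p. is_path T p r x)" for x
  have P: "is_path T (P x) r x" if "x < n" for x
    unfolding P_def using cT rn that unfolding connected_graph_def by (metis someI_ex)
  have uniq: "\<And>p q u v. is_path T p u v \<Longrightarrow> is_path T q u v \<Longrightarrow> p = q"
    using path_unique[OF symT ncT] by blast
  define d where "d x = walk_gain phi2 (P x) / walk_gain phi1 (P x)" for x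
  have wnz: "\<And>p. successively T p \<Longrightarrow> walk_gain phi1 p \<noteq> 0 \<and> walk_gain phi2 p \<noteq> 0"
    using wg_nz[OF g1] wg_nz[OF g2] sTE by blast
  have dnz: "d x \<noteq> 0" if "x < n" for x
    using wnz P[OF that] unfolding d_def is_path_alt by auto
  define rel where "rel s t \<longleftrightarrow> phi2 s t * d s = phi1 s t * d t" for s t
  have relsym: "rel t s" if "E s t" "rel s t" for s t
    using rel_sym[OF g1 g2 that(1)] that(2) unfolding rel_def by blast
  have tree_half: "rel u v" if "T u v" "v \<notin> set (P u)" for u v
  proof -
    have un: "u < n" "v < n" using Tn that(1) by auto
    have pu: "is_path T (P u) r u" using P un by blast
    have "is_path T (P u @ [v]) r v"
      using pu that unfolding is_path_alt by (auto simp: successively_append_iff)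
    then have Pv: "P v = P u @ [v]" using uniq P un by blast
    have ne: "P u \<noteq> []" and lu: "last (P u) = u" using pu unfolding is_path_alt by auto
    have nz: "walk_gain phi1 (P u) \<noteq> 0" using wnz pu unfolding is_path_alt by auto
    show ?thesis unfolding rel_def d_def Pv wg_snoc[OF ne] lu using nz phinz[OF TE[OF that(1)]]
      by (simp add: field_simps)
  qed
  have tree_rel: "rel u v" if "T u v" for u v
  proof (cases "v \<in> set (P u)")
    case False then show ?thesis using tree_half that by blast
  next
    case True
    have un: "u < n" "v < n" using Tn that(1) by auto
    show ?thesis
    proof (cases "u \<in> set (P v)")
      case False
      then show ?thesis using tree_half[OF symT[OF that] False] relsym TE symT that by blast
    next
      case uP: True
      have pu: "is_path T (P u) r u" using P un by blast
      obtain xs ys where dec: "P u = xs @ v # ys" using True by (meson split_list)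
      have "successively T ((xs @ [v]) @ ys)" using pu unfolding dec is_path_alt by simp
      then have "successively T (xs @ [v])" using successively_append_iff by blast
      then have "is_path T (xs @ [v]) r v"
        using pu unfolding dec is_path_alt
        by (cases xs) auto
      then have "P v = xs @ [v]" using uniq P un by blast
      then have "u \<in> set xs" using uP Tn that by auto
      moreover have "u = last (v # ys)" using pu unfolding dec is_path_alt by auto
      moreover have "distinct (xs @ v # ys)" using pu dec unfolding is_path_alt by auto
      ultimately show ?thesis by (metis distinct_append last_in_set list.distinct(1) disjoint_iff)
    qed
  qed
  have walk_rel: "walk_gain phi2 p * d (hd p) = walk_gain phi1 p * d (last p)"
    if "successively T p" "p \<noteq> []" for p
    using that
  proof (induction p rule: rev_induct)
    case Nil then show ?case by simp
  next
    case (snoc x xs)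
    show ?case
    proof (cases "xs = []")
      case True then show ?thesis by (simp add: walk_gain_def)
    next
      case False
      have sx: "successively T xs" "T (last xs) x"
        using snoc.prems(1) False by (auto simp: successively_append_iff)
      have IH: "walk_gain phi2 xs * d (hd xs) = walk_gain phi1 xs * d (last xs)"
        using snoc.IH sx False by blast
      have e: "phi2 (last xs) x * d (last xs) = phi1 (last xs) x * d x"
        using tree_rel[OF sx(2)] unfolding rel_def .
      have "walk_gain phi2 (xs @ [x]) * d (hd (xs @ [x])) = (walk_gain phi2 xs * d (hd xs)) * phi2 (last xs) x"
        using False by (simp add: wg_snoc)
      also have "\<dots> = walk_gain phi1 xs * (phi2 (last xs) x * d (last xs))" unfolding IH by simp
      also have "\<dots> = walk_gain phi1 (xs @ [x]) * d (last (xs @ [x]))"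
        unfolding e using False by (simp add: wg_snoc)
      finally show ?thesis .
    qed
  qed
  have nontree: "rel t s" if nt: "E s t" "\<not> T s t" "tree_le T r s t" for s t
  proof -
    obtain q where q: "is_path T q r t" "s \<in> set q" using nt(3) unfolding tree_le_def by blast
    obtain xs ys where dec: "q = xs @ s # ys" using q(2) by (meson split_list)
    define p where "p = s # ys"
    have pp: "is_path T p s t" using q(1) unfolding dec p_def is_path_alt
      by (auto simp: successively_append_iff)
    have h: "walk_gain phi1 (p @ [s]) = walk_gain phi2 (p @ [s])" using assms(6)[OF nt pp] .
    have ne: "p \<noteq> []" and lp: "last p = t" and hp: "hd p = s" and sp: "successively T p"
      using pp unfolding is_path_alt by auto
    have h2: "walk_gain phi1 p * phi1 t s = walk_gain phi2 p * phi2 t s"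
      using h unfolding wg_snoc[OF ne] lp .
    have w: "walk_gain phi2 p * d s = walk_gain phi1 p * d t"
      using walk_rel[OF sp ne] unfolding lp hp .
    have nz: "walk_gain phi1 p \<noteq> 0" using wnz sp by blast
    have "walk_gain phi1 p * (phi1 t s * d s) = walk_gain phi1 p * (phi2 t s * d t)"
    proof -
      have "walk_gain phi1 p * (phi1 t s * d s) = (walk_gain phi2 p * d s) * phi2 t s"
        using h2 by (metis mult.commute mult.left_commute)
      also have "\<dots> = walk_gain phi1 p * (phi2 t s * d t)" unfolding w by simp
      finally show ?thesis .
    qed
    then show ?thesis unfolding rel_def using nz by simp
  qed
  have all_rel: "rel s t" if "E s t" for s t
  proof (cases "T s t")
    case True then show ?thesis using tree_rel by blast
  next
    case False
    have F2: "\<not> T t s" using False symT by blast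
    from norm[OF that] show ?thesis
    proof
      assume "tree_le T r s t"
      then show ?thesis using nontree[OF that False] relsym symE that by blast
    next
      assume "tree_le T r t s"
      then show ?thesis using nontree[OF symE[OF that] F2] by blast
    qed
  qed
  define A1 where "A1 = gain_adj n E phi1"
  define A2 where "A2 = gain_adj n E phi2"
  define D where "D = mat_diag n d"
  define Di where "Di = mat_diag n (\<lambda>i. inverse (d i))"
  have A1c: "A1 \<in> carrier_mat n n" unfolding A1_def gain_adj_def by simp
  have "Di * A1 * D = mat n n (\<lambda>(i, j). inverse (d i) * A1 $$ (i, j) * d j)"
    unfolding Di_def D_def
    by (subst mat_diag_mult_left[OF A1c], subst mat_diag_mult_right[of _ n], auto)
  also have "\<dots> = A2"
  proof (rule eq_matI)
    fix i j assume ij: "i < dim_row A2" "j < dim_col A2"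
    then have ij': "i < n" "j < n" unfolding A2_def gain_adj_def by auto
    show "mat n n (\<lambda>(i, j). inverse (d i) * A1 $$ (i, j) * d j) $$ (i, j) = A2 $$ (i, j)"
    proof (cases "E i j")
      case True
      have "phi2 i j * d i = phi1 i j * d j" using all_rel[OF True] unfolding rel_def .
      then show ?thesis using ij' True dnz[OF ij'(1)] unfolding A1_def A2_def gain_adj_def
        by (simp add: field_simps)
    next
      case False
      then show ?thesis using ij' unfolding A1_def A2_def gain_adj_def by simp
    qed
  qed (auto simp: A2_def gain_adj_def)
  finally have sim: "A2 = Di * A1 * D" by simp
  have inv: "Di * D = 1\<^sub>m n" "D * Di = 1\<^sub>m n"
    unfolding Di_def D_def mat_diag_diag
    by (rule eq_matI, auto simp: mat_diag_def dnz)+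
  have A2c: "A2 \<in> carrier_mat n n" unfolding A2_def gain_adj_def by simp
  have Dc: "D \<in> carrier_mat n n" "Di \<in> carrier_mat n n" unfolding D_def Di_def by simp_all
  have dr: "dim_row A2 = n" using A2c by simp
  have "similar_mat_wit A2 A1 Di D"
    unfolding similar_mat_wit_def Let_def dr using A2c A1c Dc inv sim by blast
  then have "similar_mat A2 A1" unfolding similar_mat_def by blast
  then have "char_poly A2 = char_poly A1" by (rule char_poly_similar)
  then show ?thesis unfolding cospectral_def A1_def A2_def by simp
qed

end
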